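(* Let $G=H\oplus_3 K$ be a $3$-sum of $2$-connected cubic graphs $H$ and $K$ such that $\pi(G)=4$. If $\pi(H)\ge 5$ or $\pi(K)\ge 5$, then, with respect to every perfect-matching $4$-cover of $G$, each edge of the principal $3$-edge-cut is doubly covered.
   Context: Graphs are finite; loops and multiple edges are allowed. For a bridgeless cubic graph $G$, the perfect matching index $\pi(G)$ is the smallest number of perfect matchings whose union is $E(G)$; a perfect-matching $4$-cover is a set of four perfect matchings whose union is $E(G)$, and an edge is doubly covered if it belongs to exactly two of them. A $3$-sum $H\oplus_3 K$ with distinguished vertices $u\in V(H)$, $v\in V(K)$ is obtained by deleting $u$ and $v$ and joining the three dangling edge-ends formerly incident with $u$ bijectively to the three dangling edge-ends formerly incident with $v$; the three new edges form the principal $3$-edge-cut. *)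

theory Defs
  imports Main
begin

text \<open>Finite multigraphs (loops and parallel edges allowed). Each edge has a set of
  ends of cardinality 1 (a loop) or 2 (an ordinary edge).\<close>

record ('v, 'e) mgraph =
  verts :: "'v set"
  edges :: "'e set"
  ends  :: "'e \<Rightarrow> 'v set"

definition wf_mgraph :: "('v, 'e) mgraph \<Rightarrow> bool" where
  "wf_mgraph G \<longleftrightarrow> finite (verts G) \<and> finite (edges G) \<and>
     (\<forall>e\<in>edges G. ends G e \<subseteq> verts G \<and> 1 \<le> card (ends G e) \<and> card (ends G e) \<le> 2)"

definition is_loop :: "('v, 'e) mgraph \<Rightarrow> 'e \<Rightarrow> bool" where
  "is_loop G e \<longleftrightarrow> card (ends G e) = 1"

definition degree :: "('v, 'e) mgraph \<Rightarrow> 'v \<Rightarrow> nat" where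
  "degree G x = card {e \<in> edges G. x \<in> ends G e \<and> \<not> is_loop G e}
              + 2 * card {e \<in> edges G. x \<in> ends G e \<and> is_loop G e}"

definition cubic :: "('v, 'e) mgraph \<Rightarrow> bool" where
  "cubic G \<longleftrightarrow> wf_mgraph G \<and> (\<forall>x\<in>verts G. degree G x = 3)"

definition adj :: "('v, 'e) mgraph \<Rightarrow> 'v \<Rightarrow> 'v \<Rightarrow> bool" where
  "adj G x y \<longleftrightarrow> (\<exists>e\<in>edges G. x \<in> ends G e \<and> y \<in> ends G e)"

definition connected :: "('v, 'e) mgraph \<Rightarrow> bool" where
  "connected G \<longleftrightarrow> verts G \<noteq> {} \<and>
     (\<forall>x\<in>verts G. \<forall>y\<in>verts G. (adj G)\<^sup>*\<^sup>* x y)"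

definition delete_vertex :: "('v, 'e) mgraph \<Rightarrow> 'v \<Rightarrow> ('v, 'e) mgraph" where
  "delete_vertex G w = \<lparr> verts = verts G - {w}, edges = {e \<in> edges G. w \<notin> ends G e},
                          ends = ends G \<rparr>"

definition two_connected :: "('v, 'e) mgraph \<Rightarrow> bool" where
  "two_connected G \<longleftrightarrow> wf_mgraph G \<and> card (verts G) \<ge> 3 \<and> connected G \<and>
     (\<forall>w\<in>verts G. connected (delete_vertex G w))"

definition perfect_matching :: "('v, 'e) mgraph \<Rightarrow> 'e set \<Rightarrow> bool" where
  "perfect_matching G M \<longleftrightarrow> M \<subseteq> edges G \<and> (\<forall>e\<in>M. \<not> is_loop G e) \<and>
     (\<forall>x\<in>verts G. \<exists>!e. e \<in> M \<and> x \<in> ends G e)"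

definition pm_index :: "('v, 'e) mgraph \<Rightarrow> nat" where
  "pm_index G = (LEAST k. \<exists>M :: nat \<Rightarrow> 'e set.
      (\<forall>i<k. perfect_matching G (M i)) \<and> (\<Union>i<k. M i) = edges G)"

definition pm_4cover :: "('v, 'e) mgraph \<Rightarrow> (nat \<Rightarrow> 'e set) \<Rightarrow> bool" where
  "pm_4cover G M \<longleftrightarrow> (\<forall>i<4. perfect_matching G (M i)) \<and> (\<Union>i<4. M i) = edges G"

definition doubly_covered :: "(nat \<Rightarrow> 'e set) \<Rightarrow> 'e \<Rightarrow> bool" where
  "doubly_covered M e \<longleftrightarrow> card {i. i < 4 \<and> e \<in> M i} = 2"

definition incident :: "('v, 'e) mgraph \<Rightarrow> 'v \<Rightarrow> 'e set" where
  "incident G x = {e \<in> edges G. x \<in> ends G e}"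

definition other_end :: "('v, 'e) mgraph \<Rightarrow> 'v \<Rightarrow> 'e \<Rightarrow> 'v" where
  "other_end G x e = (THE y. ends G e = {x, y})"

text \<open>3-sum: delete u from H and v from K; the H-edge e at u and the K-edge sigma e at v
  are merged into a single new edge, represented by Inl e, joining the other end of e
  with the other end of sigma e.\<close>
definition three_sum :: "('v, 'e) mgraph \<Rightarrow> 'v \<Rightarrow> ('w, 'f) mgraph \<Rightarrow> 'w \<Rightarrow> ('e \<Rightarrow> 'f)
    \<Rightarrow> ('v + 'w, 'e + 'f) mgraph" where
  "three_sum H u K v \<sigma> = \<lparr>
     verts = Inl ` (verts H - {u}) \<union> Inr ` (verts K - {v}),
     edges = Inl ` edges H \<union> Inr ` (edges K - incident K v),
     ends = (\<lambda>x. case x of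
               Inl e \<Rightarrow> (if u \<in> ends H e
                         then {Inl (other_end H u e), Inr (other_end K v (\<sigma> e))}
                         else Inl ` ends H e)
             | Inr f \<Rightarrow> Inr ` ends K f) \<rparr>"

definition principal_cut :: "('v, 'e) mgraph \<Rightarrow> 'v \<Rightarrow> ('e + 'f) set" where
  "principal_cut H u = Inl ` incident H u"

end

theory Submission
  imports Defs
begin

lemma swap_count:
  assumes "finite X" "finite Y"
  shows "(\<Sum>x\<in>X. card {y\<in>Y. P x y}) = (\<Sum>y\<in>Y. card {x\<in>X. P x y})"
proof -
  have "(\<Sum>x\<in>X. card {y\<in>Y. P x y}) = (\<Sum>x\<in>X. \<Sum>y\<in>Y. if P x y then 1 else 0)"
    using assms by (simp add: sum.inter_filter[symmetric])
  also have "\<dots> = (\<Sum>y\<in>Y. \<Sum>x\<in>X. if P x y then 1 else 0)" by (rule sum.swap)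
  also have "\<dots> = (\<Sum>y\<in>Y. card {x\<in>X. P x y})"
    using assms by (simp add: sum.inter_filter[symmetric])
  finally show ?thesis .
qed

lemma loop_card:
  assumes "wf_mgraph G" "e \<in> edges G" "\<not> is_loop G e" "x \<in> ends G e"
  shows "\<exists>y. ends G e = {x, y} \<and> y \<noteq> x \<and> y \<in> verts G"
proof -
  have c: "card (ends G e) = 2" "ends G e \<subseteq> verts G"
    using assms unfolding wf_mgraph_def is_loop_def by force+
  then obtain a b where ab: "ends G e = {a, b}" "a \<noteq> b" by (meson card_2_iff)
  show ?thesis using ab assms(4) c(2) by (cases "x = a") auto
qed

lemma other_end_eq:
  assumes "ends G e = {x, y}" "y \<noteq> x"
  shows "other_end G x e = y"
  unfolding other_end_def using assms
  by (rule_tac the_equality) (auto simp: doubleton_eq_iff)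

lemma handshake_even:
  assumes "cubic G"
  shows "even (card (verts G))"
proof -
  have wf: "wf_mgraph G" using assms by (simp add: cubic_def)
  hence fin: "finite (verts G)" "finite (edges G)" by (auto simp: wf_mgraph_def)
  have "(\<Sum>x\<in>verts G. degree G x) = 3 * card (verts G)"
    using assms by (simp add: cubic_def)
  moreover have "(\<Sum>x\<in>verts G. degree G x) =
     (\<Sum>x\<in>verts G. card {e \<in> edges G. x \<in> ends G e \<and> \<not> is_loop G e})
     + 2 * (\<Sum>x\<in>verts G. card {e \<in> edges G. x \<in> ends G e \<and> is_loop G e})"
    by (simp add: degree_def sum.distrib sum_distrib_left)
  moreover have "(\<Sum>x\<in>verts G. card {e \<in> edges G. x \<in> ends G e \<and> \<not> is_loop G e})
     = (\<Sum>e\<in>edges G. card {x \<in> verts G. x \<in> ends G e \<and> \<not> is_loop G e})"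
    using fin by (rule swap_count)
  moreover have "\<dots> = (\<Sum>e\<in>edges G. 2 * (if is_loop G e then 0 else 1))"
  proof (rule sum.cong)
    fix e assume e: "e \<in> edges G"
    show "card {x \<in> verts G. x \<in> ends G e \<and> \<not> is_loop G e} = 2 * (if is_loop G e then 0 else 1)"
    proof (cases "is_loop G e")
      case False
      have "{x \<in> verts G. x \<in> ends G e \<and> \<not> is_loop G e} = ends G e"
        using False e wf unfolding wf_mgraph_def by auto
      thus ?thesis using False by (simp add: is_loop_def) (use e wf in \<open>auto simp: wf_mgraph_def\<close>)
    qed simp
  qed simp
  ultimately have "3 * card (verts G) = 2 * (\<Sum>e\<in>edges G. (if is_loop G e then 0 else 1))
      + 2 * (\<Sum>x\<in>verts G. card {e \<in> edges G. x \<in> ends G e \<and> is_loop G e})"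
    by (simp add: sum_distrib_left)
  thus ?thesis by presburger
qed

lemma noloop_at:
  assumes H2: "two_connected G" and Hc: "cubic G" and x: "x \<in> verts G"
    and e: "l \<in> edges G" "x \<in> ends G l"
  shows "\<not> is_loop G l"
proof
  assume lp: "is_loop G l"
  have wf: "wf_mgraph G" using Hc by (simp add: cubic_def)
  hence fin: "finite (verts G)" "finite (edges G)" by (auto simp: wf_mgraph_def)
  let ?A = "{e \<in> edges G. x \<in> ends G e \<and> \<not> is_loop G e}"
  let ?B = "{e \<in> edges G. x \<in> ends G e \<and> is_loop G e}"
  have "card ?A + 2 * card ?B = 3" using Hc x by (simp add: cubic_def degree_def)
  moreover have "card ?B \<ge> 1"
  proof -
    have "l \<in> ?B" using e lp by auto
    moreover have "finite ?B" using fin by auto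
    ultimately show ?thesis by (metis One_nat_def Suc_leI card_gt_0_iff empty_iff)
  qed
  ultimately have "card ?A = 1" by presburger
  then obtain e0 where A: "?A = {e0}" by (meson card_1_singletonE)
  hence e0: "e0 \<in> edges G" "x \<in> ends G e0" "\<not> is_loop G e0" by auto
  obtain w where w: "ends G e0 = {x, w}" "w \<noteq> x" "w \<in> verts G"
    using loop_card[OF wf e0(1) e0(3) e0(2)] by blast
  have "card (verts G) \<ge> 3" using H2 by (simp add: two_connected_def)
  have "\<exists>z\<in>verts G. z \<noteq> x \<and> z \<noteq> w"
  proof (rule ccontr)
    assume "\<not> ?thesis"
    hence "verts G \<subseteq> {x, w}" by auto
    hence "card (verts G) \<le> card {x, w}" by (simp add: card_mono)
    also have "\<dots> \<le> 2" by (simp add: card_insert_le_m1)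
    finally show False using \<open>card (verts G) \<ge> 3\<close> by simp
  qed
  then obtain z where z: "z \<in> verts G" "z \<noteq> x" "z \<noteq> w" by blast
  let ?D = "delete_vertex G w"
  have "connected ?D" using H2 w(3) by (simp add: two_connected_def)
  hence path: "(adj ?D)\<^sup>*\<^sup>* x z" using x z w unfolding connected_def delete_vertex_def by auto
  have step: "y = x" if adjxy: "adj ?D x y" for y
  proof -
    obtain f where f: "f \<in> edges G" "w \<notin> ends G f" "x \<in> ends G f" "y \<in> ends G f"
      using adjxy unfolding adj_def delete_vertex_def by auto
    show ?thesis
    proof (cases "is_loop G f")
      case True
      hence "card (ends G f) = 1" by (simp add: is_loop_def)
      then obtain a where "ends G f = {a}" by (meson card_1_singletonE)
      thus ?thesis using f by auto
    next
      case False
      hence "f \<in> ?A" using f by auto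
      hence "f = e0" using A by auto
      thus ?thesis using f w by auto
    qed
  qed
  have "z = x" using path
  proof (induction rule: rtranclp_induct)
    case base show ?case by simp
  next
    case (step y z) thus ?case using \<open>\<And>y. adj ?D x y \<Longrightarrow> y = x\<close> by auto
  qed
  thus False using z by simp
qed

locale ts =
  fixes H :: "('v, 'e) mgraph" and K :: "('w, 'f) mgraph"
    and u :: 'v and v :: 'w and \<sigma> :: "'e \<Rightarrow> 'f"
  assumes H2: "two_connected H" and Hc: "cubic H"
    and K2: "two_connected K" and Kc: "cubic K"
    and uH: "u \<in> verts H" and vK: "v \<in> verts K"
    and bij: "bij_betw \<sigma> (incident H u) (incident K v)"
begin

abbreviation "G \<equiv> three_sum H u K v \<sigma>"

lemma wfH: "wf_mgraph H" using Hc by (simp add: cubic_def)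
lemma wfK: "wf_mgraph K" using Kc by (simp add: cubic_def)

lemma cutH: assumes "g \<in> incident H u"
  shows "ends H g = {u, other_end H u g} \<and> other_end H u g \<noteq> u \<and> other_end H u g \<in> verts H"
proof -
  have g: "g \<in> edges H" "u \<in> ends H g" using assms by (auto simp: incident_def)
  have "\<not> is_loop H g" using noloop_at[OF H2 Hc uH g] .
  then obtain y where "ends H g = {u, y}" "y \<noteq> u" "y \<in> verts H"
    using loop_card[OF wfH g(1) _ g(2)] by blast
  thus ?thesis using other_end_eq by metis
qed

lemma cutK: assumes "f \<in> incident K v"
  shows "ends K f = {v, other_end K v f} \<and> other_end K v f \<noteq> v \<and> other_end K v f \<in> verts K"
proof -
  have g: "f \<in> edges K" "v \<in> ends K f" using assms by (auto simp: incident_def)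
  have "\<not> is_loop K f" using noloop_at[OF K2 Kc vK g] .
  then obtain y where "ends K f = {v, y}" "y \<noteq> v" "y \<in> verts K"
    using loop_card[OF wfK g(1) _ g(2)] by blast
  thus ?thesis using other_end_eq by metis
qed

lemma sig: "g \<in> incident H u \<Longrightarrow> \<sigma> g \<in> incident K v"
  using bij by (auto simp: bij_betw_def)

lemma vertsG: "verts G = Inl ` (verts H - {u}) \<union> Inr ` (verts K - {v})"
  by (simp add: three_sum_def)
lemma edgesG: "edges G = Inl ` edges H \<union> Inr ` (edges K - incident K v)"
  by (simp add: three_sum_def)
lemma endsG_cut: "g \<in> incident H u \<Longrightarrow>
   ends G (Inl g) = {Inl (other_end H u g), Inr (other_end K v (\<sigma> g))}"
  by (simp add: three_sum_def incident_def)
lemma endsG_int: "u \<notin> ends H g \<Longrightarrow> ends G (Inl g) = Inl ` ends H g"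
  by (simp add: three_sum_def)
lemma endsG_Inr: "ends G (Inr f) = Inr ` ends K f"
  by (simp add: three_sum_def)

lemma inc_u: "g \<in> edges H \<Longrightarrow> (g \<in> incident H u) = (u \<in> ends H g)"
  by (simp add: incident_def)

lemma Inl_vert: assumes "x \<noteq> u" "g \<in> edges H"
  shows "(Inl x \<in> ends G (Inl g)) = (x \<in> ends H g)"
proof (cases "g \<in> incident H u")
  case True
  thus ?thesis using cutH[OF True] endsG_cut[OF True] assms by auto
next
  case False
  thus ?thesis using endsG_int assms inc_u by auto
qed

lemma Inl_vert_Inr: "(Inl x \<in> ends G (Inr f)) = False"
  using endsG_Inr by auto

lemma Inr_vert: assumes "y \<noteq> v" "g \<in> edges H"
  shows "(Inr y \<in> ends G (Inl g)) = (g \<in> incident H u \<and> y \<in> ends K (\<sigma> g))"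
proof (cases "g \<in> incident H u")
  case True
  thus ?thesis using cutK[OF sig[OF True]] endsG_cut[OF True] assms by auto
next
  case False
  thus ?thesis using endsG_int assms inc_u by auto
qed

lemma finG: "finite (edges G)"
  using wfH wfK by (simp add: edgesG wf_mgraph_def)

lemma card_inc_u: "card (incident H u) = 3"
proof -
  have A: "{e \<in> edges H. u \<in> ends H e \<and> is_loop H e} = {}"
    using noloop_at[OF H2 Hc uH] by auto
  have B: "{e \<in> edges H. u \<in> ends H e \<and> \<not> is_loop H e} = incident H u"
    using noloop_at[OF H2 Hc uH] by (auto simp: incident_def)
  have "degree H u = 3" using Hc uH by (simp add: cubic_def)
  thus ?thesis unfolding degree_def A B by simp
qed

end

lemma card_unique: "\<exists>!e. P e \<Longrightarrow> card {e. P e} = 1"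
proof -
  assume "\<exists>!e. P e"
  then obtain e where "P e" "\<And>e'. P e' \<Longrightarrow> e' = e" by blast
  hence "{e. P e} = {e}" by blast
  thus ?thesis by simp
qed

locale ts_cov = ts +
  fixes M
  assumes cover: "pm_4cover (three_sum H u K v \<sigma>) M"
begin

definition cov where "cov f = card {i. i < 4 \<and> f \<in> M i}"

lemma pmG: "i < 4 \<Longrightarrow> perfect_matching G (M i)"
  using cover by (simp add: pm_4cover_def)

lemma MsubG: "i < 4 \<Longrightarrow> M i \<subseteq> edges G"
  using pmG by (simp add: perfect_matching_def)

lemma covered: "f \<in> edges G \<Longrightarrow> \<exists>i<4. f \<in> M i"
  using cover unfolding pm_4cover_def by blast

lemma noloopG: "f \<in> edges G \<Longrightarrow> \<not> is_loop G f"
  using covered pmG by (force simp: perfect_matching_def)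

lemma cov_ge1: "f \<in> edges G \<Longrightarrow> cov f \<ge> 1"
proof -
  assume "f \<in> edges G"
  then obtain i where "i < 4" "f \<in> M i" using covered by blast
  hence "i \<in> {i. i < 4 \<and> f \<in> M i}" by simp
  moreover have "finite {i. i < 4 \<and> f \<in> M i}" by simp
  ultimately show ?thesis unfolding cov_def by (metis One_nat_def Suc_leI card_gt_0_iff empty_iff)
qed

lemma card_inc_x: assumes x: "x \<in> verts H" "x \<noteq> u"
  shows "card (incident H x) = 3"
proof -
  have A: "{e \<in> edges H. x \<in> ends H e \<and> is_loop H e} = {}"
  proof (rule ccontr)
    assume "\<not> ?thesis"
    then obtain g where g: "g \<in> edges H" "x \<in> ends H g" "is_loop H g" by auto
    then obtain a where a: "ends H g = {a}" unfolding is_loop_def by (meson card_1_singletonE)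
    hence "ends H g = {x}" using g by auto
    hence "ends G (Inl g) = {Inl x}" using endsG_int x by auto
    hence "is_loop G (Inl g)" by (simp add: is_loop_def)
    moreover have "Inl g \<in> edges G" using g by (simp add: edgesG)
    ultimately show False using noloopG by blast
  qed
  have B: "{e \<in> edges H. x \<in> ends H e \<and> \<not> is_loop H e} = incident H x"
    using A by (auto simp: incident_def)
  have "degree H x = 3" using Hc x by (simp add: cubic_def)
  thus ?thesis unfolding degree_def A B by simp
qed

lemma dc: "(\<Sum>i<4. card {f\<in>S. f \<in> M i}) = (\<Sum>f\<in>S. cov f)" if "finite S"
proof -
  have "(\<Sum>i<4. card {f\<in>S. f \<in> M i}) = (\<Sum>f\<in>S. card {i\<in>{..<4::nat}. f \<in> M i})"
    using swap_count[of "{..<4::nat}" S "\<lambda>i f. f \<in> M i"] that by simp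
  also have "\<dots> = (\<Sum>f\<in>S. cov f)" unfolding cov_def by (simp add: lessThan_def)
  finally show ?thesis .
qed

lemma cov_le2: assumes g: "g \<in> incident H u" shows "cov (Inl g) \<le> 2"
proof -
  define x where "x = other_end H u g"
  have x: "x \<in> verts H" "x \<noteq> u" "x \<in> ends H g" using cutH[OF g] x_def by auto
  define S where "S = {f \<in> edges G. Inl x \<in> ends G f}"
  have gE: "g \<in> edges H" using g by (simp add: incident_def)
  have S: "S = Inl ` incident H x"
    unfolding S_def using x Inl_vert Inl_vert_Inr
    by (auto simp: incident_def edgesG)
  have finS: "finite S" using S_def finG by simp
  have cS: "card S = 3" unfolding S using card_inc_x[OF x(1,2)]
    by (simp add: card_image)
  have gS: "Inl g \<in> S" unfolding S using x gE by (auto simp: incident_def)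
  have "Inl x \<in> verts G" using x by (simp add: vertsG)
  have one: "card {f\<in>S. f \<in> M i} = 1" if i: "i < 4" for i
  proof -
    have "\<exists>!e. e \<in> M i \<and> Inl x \<in> ends G e"
      using pmG[OF i] \<open>Inl x \<in> verts G\<close> by (simp add: perfect_matching_def)
    hence "card {e. e \<in> M i \<and> Inl x \<in> ends G e} = 1" by (rule card_unique)
    moreover have "{f\<in>S. f \<in> M i} = {e. e \<in> M i \<and> Inl x \<in> ends G e}"
      using S_def MsubG[OF i] by auto
    ultimately show ?thesis by simp
  qed
  have "(\<Sum>i<4. card {f\<in>S. f \<in> M i}) = 4" using one by simp
  hence "(\<Sum>f\<in>S. cov f) = 4" using dc[OF finS] by simp
  moreover have "(\<Sum>f\<in>S. cov f) = cov (Inl g) + (\<Sum>f\<in>S - {Inl g}. cov f)"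
    using finS gS by (simp add: sum.remove)
  moreover have "(\<Sum>f\<in>S - {Inl g}. cov f) \<ge> (\<Sum>f\<in>S - {Inl g}. 1)"
    by (rule sum_mono) (use S_def cov_ge1 in auto)
  moreover have "(\<Sum>f\<in>S - {Inl g}. (1::nat)) = 2" using cS gS finS by simp
  ultimately show ?thesis by linarith
qed

end

context ts_cov begin

lemma parity: assumes i: "i < 4" shows "odd (card (M i \<inter> principal_cut H u))"
proof -
  define A where "A = {a \<in> verts G. isl a}"
  have A_eq: "A = Inl ` (verts H - {u})" unfolding A_def by (auto simp: vertsG)
  let ?C = "principal_cut H u"
  have finH: "finite (verts H)" using wfH by (simp add: wf_mgraph_def)
  have cA: "card A = card (verts H) - 1" unfolding A_eq
    using finH uH by (simp add: card_image)
  have "even (card (verts H))" using handshake_even[OF Hc] .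
  moreover have "card (verts H) > 0" using finH uH card_gt_0_iff by blast
  ultimately have oA: "odd (card A)" using cA by presburger
  have finA: "finite A" using finH A_eq by simp
  have finM: "finite (M i)" using MsubG[OF i] finG finite_subset by blast
  have AV: "A \<subseteq> verts G" unfolding A_eq by (simp add: vertsG)
  have "card A = (\<Sum>a\<in>A. card {f\<in>M i. a \<in> ends G f})"
  proof -
    have "card {f\<in>M i. a \<in> ends G f} = 1" if "a \<in> A" for a
    proof -
      have "\<exists>!e. e \<in> M i \<and> a \<in> ends G e"
        using pmG[OF i] AV that unfolding perfect_matching_def by blast
      hence "card {e. e \<in> M i \<and> a \<in> ends G e} = 1" by (rule card_unique)
      thus ?thesis by simp
    qed
    thus ?thesis by simp
  qed
  also have "\<dots> = (\<Sum>f\<in>M i. card {a\<in>A. a \<in> ends G f})"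
    using swap_count[OF finA finM, of "\<lambda>a f. a \<in> ends G f"] .
  also have "\<dots> = (\<Sum>f\<in>M i \<inter> ?C. card {a\<in>A. a \<in> ends G f})
      + (\<Sum>f\<in>M i - ?C. card {a\<in>A. a \<in> ends G f})"
    using finM by (metis (no_types, lifting) Diff_Diff_Int Diff_subset inf_commute
        sum.subset_diff Int_lower2 finite_Int) 
  also have "(\<Sum>f\<in>M i \<inter> ?C. card {a\<in>A. a \<in> ends G f}) = (\<Sum>f\<in>M i \<inter> ?C. 1)"
  proof (rule sum.cong)
    fix f assume f: "f \<in> M i \<inter> ?C"
    then obtain g where g: "g \<in> incident H u" "f = Inl g" by (auto simp: principal_cut_def)
    have "{a\<in>A. a \<in> ends G f} = {Inl (other_end H u g)}"
      using endsG_cut[OF g(1)] cutH[OF g(1)] g(2) unfolding A_eq by auto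
    thus "card {a\<in>A. a \<in> ends G f} = 1" by simp
  qed simp
  finally have eq: "card A = card (M i \<inter> ?C) + (\<Sum>f\<in>M i - ?C. card {a\<in>A. a \<in> ends G f})"
    by simp
  have "even (\<Sum>f\<in>M i - ?C. card {a\<in>A. a \<in> ends G f})"
  proof (rule dvd_sum)
    fix f assume f: "f \<in> M i - ?C"
    hence fE: "f \<in> edges G" using MsubG[OF i] by auto
    show "even (card {a\<in>A. a \<in> ends G f})"
    proof (cases f)
      case (Inl g)
      have gE: "g \<in> edges H" using fE Inl by (auto simp: edgesG)
      have gn: "u \<notin> ends H g" using f Inl gE by (auto simp: principal_cut_def incident_def)
      have eG: "ends G f = Inl ` ends H g" using endsG_int[OF gn] Inl by simp
      have sub: "ends H g \<subseteq> verts H" using wfH gE by (auto simp: wf_mgraph_def)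
      have "{a\<in>A. a \<in> ends G f} = ends G f" using eG sub gn unfolding A_eq by auto
      moreover have "card (ends G f) = card (ends H g)" using eG by (simp add: card_image)
      moreover have "card (ends H g) \<noteq> 1" using noloopG[OF fE] eG
        by (simp add: is_loop_def card_image)
      moreover have "card (ends H g) \<ge> 1" "card (ends H g) \<le> 2"
        using wfH gE by (auto simp: wf_mgraph_def)
      ultimately have "card {a\<in>A. a \<in> ends G f} = 2" by simp
      thus ?thesis by simp
    next
      case (Inr h)
      have "{a\<in>A. a \<in> ends G f} = {}" using endsG_Inr Inr unfolding A_eq by auto
      thus ?thesis by (metis card.empty dvd_0_right)
    qed
  qed
  thus ?thesis using eq oA by presburger
qed

end

lemma pm_index_le4:
  assumes "\<forall>i<4::nat. perfect_matching G (N i)" "(\<Union>i<4::nat. N i) = edges G"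
  shows "pm_index G \<le> 4"
proof -
  have "\<exists>M. (\<forall>i<4::nat. perfect_matching G (M i)) \<and> (\<Union>i<4::nat. M i) = edges G" using assms by blast
  thus ?thesis unfolding pm_index_def by (rule Least_le)
qed

context ts_cov begin

lemma ex1_uniq: "\<exists>!x. P x \<Longrightarrow> P a \<Longrightarrow> P b \<Longrightarrow> a = b" by blast

lemma one_cut: assumes i: "i < 4" and one: "card (M i \<inter> principal_cut H u) = 1"
  shows "\<exists>g0. g0 \<in> incident H u \<and> Inl g0 \<in> M i \<and>
    (\<forall>g. g \<in> incident H u \<and> Inl g \<in> M i \<longrightarrow> g = g0)"
proof -
  obtain c where c: "M i \<inter> principal_cut H u = {c}" using one by (meson card_1_singletonE)
  then obtain g0 where g0: "g0 \<in> incident H u" "c = Inl g0" by (auto simp: principal_cut_def)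
  have "Inl g0 \<in> M i" using c g0 by auto
  moreover have "g = g0" if "g \<in> incident H u" "Inl g \<in> M i" for g
  proof -
    have "Inl g \<in> M i \<inter> principal_cut H u" using that by (auto simp: principal_cut_def)
    thus "g = g0" using c g0 by auto
  qed
  ultimately show ?thesis using g0 by blast
qed

lemma cover_H: assumes one: "\<forall>i<4. card (M i \<inter> principal_cut H u) = 1"
  shows "pm_index H \<le> 4"
proof -
  define N where "N i = {g \<in> edges H. Inl g \<in> M i}" for i
  have U: "(\<Union>i<4::nat. N i) = edges H"
  proof
    show "(\<Union>i<4. N i) \<subseteq> edges H" unfolding N_def by auto
    show "edges H \<subseteq> (\<Union>i<4. N i)"
    proof
      fix g assume g: "g \<in> edges H"
      hence "Inl g \<in> edges G" by (simp add: edgesG)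
      then obtain i where "i < 4" "Inl g \<in> M i" using covered by blast
      thus "g \<in> (\<Union>i<4. N i)" using g unfolding N_def by auto
    qed
  qed
  have P: "\<forall>i<4::nat. perfect_matching H (N i)"
  proof (intro allI impI)
    fix i :: nat assume i: "i < 4"
    have c1: "card (M i \<inter> principal_cut H u) = 1" using one i by blast
    obtain g0 where g0: "g0 \<in> incident H u" "Inl g0 \<in> M i"
      "\<And>g. g \<in> incident H u \<Longrightarrow> Inl g \<in> M i \<Longrightarrow> g = g0"
      using one_cut[OF i c1] by blast
    have pm: "perfect_matching G (M i)" using pmG[OF i] .
    show "perfect_matching H (N i)" unfolding perfect_matching_def
    proof (intro conjI ballI)
      show "N i \<subseteq> edges H" unfolding N_def by auto
    next
      fix g assume g: "g \<in> N i"
      hence gE: "g \<in> edges H" and gM: "Inl g \<in> M i" unfolding N_def by auto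
      show "\<not> is_loop H g"
      proof (cases "u \<in> ends H g")
        case True thus ?thesis using noloop_at[OF H2 Hc uH gE] by simp
      next
        case False
        have "\<not> is_loop G (Inl g)" using pm gM by (simp add: perfect_matching_def)
        thus ?thesis using endsG_int[OF False] by (simp add: is_loop_def card_image)
      qed
    next
      fix x assume x: "x \<in> verts H"
      show "\<exists>!e. e \<in> N i \<and> x \<in> ends H e"
      proof (cases "x = u")
        case True
        have "g0 \<in> N i \<and> u \<in> ends H g0" using g0(1,2) unfolding N_def by (auto simp: incident_def)
        moreover have "g = g0" if gg: "g \<in> N i \<and> u \<in> ends H g" for g
        proof -
          have "g \<in> incident H u" "Inl g \<in> M i" using gg unfolding N_def by (auto simp: incident_def)
          thus ?thesis by (rule g0(3))
        qed
        ultimately show ?thesis using True by (intro ex1I[of _ g0]) blast+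
      next
        case False
        have "Inl x \<in> verts G" using x False by (simp add: vertsG)
        hence ex: "\<exists>!e. e \<in> M i \<and> Inl x \<in> ends G e" using pm unfolding perfect_matching_def by blast
        then obtain f where f: "f \<in> M i" "Inl x \<in> ends G f" by (meson ex1E)
        have fu: "f' = f" if "f' \<in> M i" "Inl x \<in> ends G f'" for f'
          using ex1_uniq[OF ex] that f by blast
        have fE: "f \<in> edges G" using f MsubG[OF i] by auto
        obtain g where g: "f = Inl g" "g \<in> edges H"
        proof (cases f)
          case (Inl g) thus ?thesis using that fE by (auto simp: edgesG)
        next
          case (Inr h) thus ?thesis using f(2) Inl_vert_Inr by simp
        qed
        have "g \<in> N i \<and> x \<in> ends H g" using g f Inl_vert[OF False] unfolding N_def by auto
        moreover have "g' = g" if "g' \<in> N i \<and> x \<in> ends H g'" for g'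
        proof -
          have "Inl g' \<in> M i" "Inl x \<in> ends G (Inl g')" using that Inl_vert[OF False] unfolding N_def by auto
          hence "Inl g' = f" by (rule fu)
          thus ?thesis using g by simp
        qed
        ultimately show ?thesis by (intro ex1I[of _ g]) blast+
      qed
    qed
  qed
  show ?thesis using pm_index_le4[OF P U] .
qed

end

context ts_cov begin

lemma sig_img: "\<sigma> ` incident H u = incident K v"
  using bij by (simp add: bij_betw_def)

lemma cover_K: assumes one: "\<forall>i<4. card (M i \<inter> principal_cut H u) = 1"
  shows "pm_index K \<le> 4"
proof -
  define N where "N i = {f \<in> edges K - incident K v. Inr f \<in> M i} \<union> \<sigma> ` {g \<in> incident H u. Inl g \<in> M i}" for i
  have incE: "incident K v \<subseteq> edges K" by (auto simp: incident_def)
  have NE: "N i \<subseteq> edges K" for i unfolding N_def using sig incE by blast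
  have U: "(\<Union>i<4::nat. N i) = edges K"
  proof
    show "(\<Union>i<4. N i) \<subseteq> edges K" using NE by blast
    show "edges K \<subseteq> (\<Union>i<4. N i)"
    proof
      fix f assume f: "f \<in> edges K"
      show "f \<in> (\<Union>i<4. N i)"
      proof (cases "f \<in> incident K v")
        case True
        then obtain g where g: "g \<in> incident H u" "f = \<sigma> g" using sig_img by blast
        hence "Inl g \<in> edges G" by (simp add: edgesG incident_def)
        then obtain i where "i < 4" "Inl g \<in> M i" using covered by blast
        hence "f \<in> N i" using g unfolding N_def by blast
        thus ?thesis using \<open>i < 4\<close> by blast
      next
        case False
        hence "Inr f \<in> edges G" using f by (simp add: edgesG)
        then obtain i where "i < 4" "Inr f \<in> M i" using covered by blast
        hence "f \<in> N i" using f False unfolding N_def by blast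
        thus ?thesis using \<open>i < 4\<close> by blast
      qed
    qed
  qed
  have P: "\<forall>i<4::nat. perfect_matching K (N i)"
  proof (intro allI impI)
    fix i :: nat assume i: "i < 4"
    have c1: "card (M i \<inter> principal_cut H u) = 1" using one i by blast
    obtain g0 where g0: "g0 \<in> incident H u" "Inl g0 \<in> M i"
      "\<And>g. g \<in> incident H u \<Longrightarrow> Inl g \<in> M i \<Longrightarrow> g = g0"
      using one_cut[OF i c1] by blast
    have pm: "perfect_matching G (M i)" using pmG[OF i] .
    show "perfect_matching K (N i)" unfolding perfect_matching_def
    proof (intro conjI ballI)
      show "N i \<subseteq> edges K" by (rule NE)
    next
      fix f assume f: "f \<in> N i"
      hence fE: "f \<in> edges K" using NE by blast
      show "\<not> is_loop K f"
      proof (cases "f \<in> incident K v")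
        case True thus ?thesis using noloop_at[OF K2 Kc vK fE] by (simp add: incident_def)
      next
        case False
        hence "Inr f \<in> M i" using f sig unfolding N_def by blast
        hence "\<not> is_loop G (Inr f)" using pm by (simp add: perfect_matching_def)
        thus ?thesis using endsG_Inr by (simp add: is_loop_def card_image)
      qed
    next
      fix y assume y: "y \<in> verts K"
      show "\<exists>!e. e \<in> N i \<and> y \<in> ends K e"
      proof (cases "y = v")
        case True
        have w: "\<sigma> g0 \<in> N i \<and> v \<in> ends K (\<sigma> g0)"
          using g0(1,2) sig[OF g0(1)] unfolding N_def by (auto simp: incident_def)
        have "f = \<sigma> g0" if ff: "f \<in> N i \<and> v \<in> ends K f" for f
        proof -
          have "f \<in> incident K v" using ff NE by (auto simp: incident_def)
          then obtain g where g: "g \<in> incident H u" "Inl g \<in> M i" "f = \<sigma> g"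
            using ff unfolding N_def by blast
          have "g = g0" using g(1,2) by (rule g0(3))
          thus ?thesis using g(3) by simp
        qed
        thus ?thesis using w True by (intro ex1I[of _ "\<sigma> g0"]) blast+
      next
        case False
        have "Inr y \<in> verts G" using y False by (simp add: vertsG)
        hence ex: "\<exists>!e. e \<in> M i \<and> Inr y \<in> ends G e" using pm unfolding perfect_matching_def by blast
        then obtain f where f: "f \<in> M i" "Inr y \<in> ends G f" by (meson ex1E)
        have fu: "f' = f" if "f' \<in> M i" "Inr y \<in> ends G f'" for f'
          using ex1_uniq[OF ex] that f by blast
        have fE: "f \<in> edges G" using f MsubG[OF i] by auto
        have lift: "(f' \<notin> incident K v \<and> f = Inr f') \<or>
                    (\<exists>g'. g' \<in> incident H u \<and> f' = \<sigma> g' \<and> f = Inl g')"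
          if ff: "f' \<in> N i \<and> y \<in> ends K f'" for f'
        proof (cases "f' \<in> incident K v")
          case False
          hence "Inr f' \<in> M i" using ff sig unfolding N_def by blast
          moreover have "Inr y \<in> ends G (Inr f')" using ff endsG_Inr by simp
          ultimately have "Inr f' = f" by (rule fu)
          thus ?thesis using False by simp
        next
          case True
          then obtain g where g: "g \<in> incident H u" "Inl g \<in> M i" "f' = \<sigma> g"
            using ff unfolding N_def by blast
          have gE: "g \<in> edges H" using g(1) by (simp add: incident_def)
          have "Inr y \<in> ends G (Inl g)" using Inr_vert[OF False gE] g ff by simp
          hence "Inl g = f" using g(2) fu by blast
          thus ?thesis using g by blast
        qed
        have exw: "\<exists>w. w \<in> N i \<and> y \<in> ends K w"
        proof (cases f)
          case (Inl g)
          have gE: "g \<in> edges H" using fE Inl by (auto simp: edgesG)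
          have gu: "g \<in> incident H u" "y \<in> ends K (\<sigma> g)"
            using Inr_vert[OF False gE] f(2) Inl by auto
          hence "\<sigma> g \<in> N i" using f(1) Inl unfolding N_def by blast
          thus ?thesis using gu by blast
        next
          case (Inr h)
          have hE: "h \<in> edges K - incident K v" using fE Inr by (auto simp: edgesG)
          have "y \<in> ends K h" using f(2) Inr endsG_Inr by auto
          moreover have "h \<in> N i" using hE f(1) Inr unfolding N_def by blast
          ultimately show ?thesis by blast
        qed
        show ?thesis
        proof (rule ex_ex1I)
          show "\<exists>w. w \<in> N i \<and> y \<in> ends K w" by (rule exw)
        next
          fix a b assume a: "a \<in> N i \<and> y \<in> ends K a" and b: "b \<in> N i \<and> y \<in> ends K b"
          show "a = b" using lift[OF a] lift[OF b] by auto
        qed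
      qed
    qed
  qed
  show ?thesis using pm_index_le4[OF P U] .
qed

end

context ts_cov begin

lemma main: assumes g: "g \<in> incident H u" and big: "pm_index H \<ge> 5 \<or> pm_index K \<ge> 5"
  shows "doubly_covered M (Inl g)"
proof (rule ccontr)
  assume nd: "\<not> doubly_covered M (Inl g)"
  define C where "C = principal_cut H u \<inter> edges G"
  have C: "C = Inl ` incident H u" by (auto simp: C_def principal_cut_def edgesG incident_def)
  have C_eq: "C = principal_cut H u" by (auto simp: C_def principal_cut_def edgesG incident_def)
  have cC: "card C = 3" unfolding C using card_inc_u by (simp add: card_image)
  have finC: "finite C" using cC card.infinite by fastforce
  have CE: "C \<subseteq> edges G" unfolding C by (auto simp: edgesG incident_def)
  have bnd: "1 \<le> cov c \<and> cov c \<le> 2" if "c \<in> C" for c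
    using that CE cov_ge1 cov_le2 unfolding C by blast
  have gC: "Inl g \<in> C" using g C by simp
  have "cov (Inl g) \<noteq> 2" using nd by (simp add: doubly_covered_def cov_def)
  hence c1: "cov (Inl g) = 1" using bnd[OF gC] by simp
  have "card (C - {Inl g}) = 2" using cC gC finC by simp
  then obtain a b where ab: "C - {Inl g} = {a, b}" "a \<noteq> b" by (meson card_2_iff)
  have aC: "a \<in> C" "b \<in> C" using ab by auto
  have "(\<Sum>c\<in>C. cov c) = cov (Inl g) + (\<Sum>c\<in>C - {Inl g}. cov c)"
    using finC gC by (simp add: sum.remove)
  also have "(\<Sum>c\<in>C - {Inl g}. cov c) = cov a + cov b" using ab by simp
  finally have s1: "(\<Sum>c\<in>C. cov c) = 1 + cov a + cov b" using c1 by simp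
  define n where "n i = card (M i \<inter> C)" for i
  have "(\<Sum>i<4. card {f\<in>C. f \<in> M i}) = (\<Sum>c\<in>C. cov c)" by (rule dc[OF finC])
  moreover have "card {f\<in>C. f \<in> M i} = n i" for i
    unfolding n_def by (metis Int_def inf_commute)
  ultimately have "(\<Sum>i<4. n i) = 1 + cov a + cov b" using s1 by simp
  hence s2: "n 0 + n 1 + n 2 + n 3 = 1 + cov a + cov b"
    by (simp add: numeral_eq_Suc lessThan_Suc)
  have od: "odd (n i)" if "i < 4" for i
    using parity[OF that] unfolding n_def C_eq .
  have "odd (n 0)" "odd (n 1)" "odd (n 2)" "odd (n 3)" using od by auto
  moreover have "1 \<le> cov a" "cov a \<le> 2" "1 \<le> cov b" "cov b \<le> 2" using bnd aC by auto
  ultimately have "n 0 = 1 \<and> n 1 = 1 \<and> n 2 = 1 \<and> n 3 = 1" using s2 by presburger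
  hence all1: "\<forall>i<4. card (M i \<inter> principal_cut H u) = 1"
    unfolding n_def C_eq by (auto simp: less_Suc_eq numeral_eq_Suc)
  show False using cover_H[OF all1] cover_K[OF all1] big by linarith
qed

end

theorem lemma6p3:
  fixes H :: "('v, 'e) mgraph" and K :: "('w, 'f) mgraph"
    and u :: 'v and v :: 'w and \<sigma> :: "'e \<Rightarrow> 'f"
  assumes "two_connected H" and "cubic H"
    and "two_connected K" and "cubic K"
    and "u \<in> verts H" and "v \<in> verts K"
    and "bij_betw \<sigma> (incident H u) (incident K v)"
    and "pm_index (three_sum H u K v \<sigma>) = 4"
    and "pm_index H \<ge> 5 \<or> pm_index K \<ge> 5"
  shows "\<forall>M. pm_4cover (three_sum H u K v \<sigma>) M \<longrightarrow>
           (\<forall>e\<in>principal_cut H u. doubly_covered M e)"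
proof (intro allI impI ballI)
  fix M :: "nat \<Rightarrow> ('e + 'f) set" and e :: "'e + 'f" assume M: "pm_4cover (three_sum H u K v \<sigma>) M" and e: "e \<in> principal_cut H u"
  interpret ts_cov H K u v \<sigma> M
    using assms M by (unfold_locales) auto
  obtain g where "g \<in> incident H u" "e = Inl g" using e by (auto simp: principal_cut_def)
  thus "doubly_covered M e" using main assms(9) by simp
qed

end
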